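(* Let $(E,\tau)$ be a uniquely generated convex space such that every $A\subseteq E$ has a unique inclusion-maximal generator. Then the partition $\mathcal{P}$ of $2^E$ into the equivalence classes of the relation $X\sim Y\iff\tau(X)=\tau(Y)$ is a hypercube partition of $2^E$, i.e., every equivalence class is an interval $[A,B]=\{C\subseteq E:A\subseteq C\subseteq B\}$ for some $A\subseteq B\subseteq E$.
   Context: $E$ is a finite set and $\tau:2^E\to 2^E$. $(E,\tau)$ is a convex space if (C1) $Y\subseteq\tau(Y)$ for all $Y\subseteq E$, and (convexity) for all $Y_1\subseteq Y_2\subseteq Y_3\subseteq E$ with $\tau(Y_1)=\tau(Y_3)$ we have $\tau(Y_2)=\tau(Y_1)$. For $A\subseteq E$, a generator of $A$ is any $B\subseteq E$ with $\tau(B)=\tau(A)$; a basis of $A$ is an inclusion-minimal generator of $A$. The space is uniquely generated if every $A\subseteq E$ has exactly one basis. A hypercube partition of $2^E$ is a partition of $2^E$ into disjoint intervals $[A,B]$. *)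

theory Defs
  imports Main
begin

definition convex_space :: "'a set \<Rightarrow> ('a set \<Rightarrow> 'a set) \<Rightarrow> bool" where
  "convex_space E \<tau> \<longleftrightarrow> finite E
     \<and> (\<forall>Y. Y \<subseteq> E \<longrightarrow> \<tau> Y \<subseteq> E)
     \<and> (\<forall>Y. Y \<subseteq> E \<longrightarrow> Y \<subseteq> \<tau> Y)
     \<and> (\<forall>Y1 Y2 Y3. Y1 \<subseteq> Y2 \<and> Y2 \<subseteq> Y3 \<and> Y3 \<subseteq> E \<and> \<tau> Y1 = \<tau> Y3 \<longrightarrow> \<tau> Y2 = \<tau> Y1)"

definition is_generator :: "'a set \<Rightarrow> ('a set \<Rightarrow> 'a set) \<Rightarrow> 'a set \<Rightarrow> 'a set \<Rightarrow> bool" where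
  "is_generator E \<tau> A B \<longleftrightarrow> B \<subseteq> E \<and> \<tau> B = \<tau> A"

definition is_basis :: "'a set \<Rightarrow> ('a set \<Rightarrow> 'a set) \<Rightarrow> 'a set \<Rightarrow> 'a set \<Rightarrow> bool" where
  "is_basis E \<tau> A B \<longleftrightarrow> is_generator E \<tau> A B
     \<and> (\<forall>C. C \<subset> B \<longrightarrow> \<not> is_generator E \<tau> A C)"

definition is_max_generator :: "'a set \<Rightarrow> ('a set \<Rightarrow> 'a set) \<Rightarrow> 'a set \<Rightarrow> 'a set \<Rightarrow> bool" where
  "is_max_generator E \<tau> A B \<longleftrightarrow> is_generator E \<tau> A B
     \<and> (\<forall>C. B \<subset> C \<longrightarrow> \<not> is_generator E \<tau> A C)"

definition uniquely_generated :: "'a set \<Rightarrow> ('a set \<Rightarrow> 'a set) \<Rightarrow> bool" where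
  "uniquely_generated E \<tau> \<longleftrightarrow> (\<forall>A. A \<subseteq> E \<longrightarrow> (\<exists>!B. is_basis E \<tau> A B))"

definition interval :: "'a set \<Rightarrow> 'a set \<Rightarrow> 'a set set" where
  "interval A B = {C. A \<subseteq> C \<and> C \<subseteq> B}"

definition hypercube_partition :: "'a set \<Rightarrow> 'a set set set \<Rightarrow> bool" where
  "hypercube_partition E P \<longleftrightarrow>
     \<Union>P = Pow E \<and> {} \<notin> P
     \<and> (\<forall>X\<in>P. \<forall>Y\<in>P. X \<noteq> Y \<longrightarrow> X \<inter> Y = {})
     \<and> (\<forall>X\<in>P. \<exists>A B. A \<subseteq> B \<and> B \<subseteq> E \<and> X = interval A B)"

definition tau_classes :: "'a set \<Rightarrow> ('a set \<Rightarrow> 'a set) \<Rightarrow> 'a set set set" where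
  "tau_classes E \<tau> = (\<lambda>X. {Y. Y \<subseteq> E \<and> \<tau> Y = \<tau> X}) ` Pow E"

end

theory Submission
  imports Defs
begin

lemma min_ex: "finite Y \<Longrightarrow> P Y \<Longrightarrow> \<exists>Z\<subseteq>Y. P Z \<and> (\<forall>W. W \<subset> Z \<longrightarrow> \<not> P W)"
proof (induction Y rule: finite_psubset_induct)
  case (psubset Y)
  show ?case
  proof (cases "\<exists>W\<subset>Y. P W")
    case True
    then obtain W where W: "W \<subset> Y" "P W" by blast
    from psubset.IH[OF W] obtain Z where Z: "Z \<subseteq> W" "P Z" "\<forall>V. V \<subset> Z \<longrightarrow> \<not> P V" by blast
    have "Z \<subseteq> Y" using Z(1) W(1) by (rule subset_psubset_trans[THEN psubset_imp_subset])
    then show ?thesis using Z(2,3) by (intro exI[of _ Z]) simp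
  next
    case False then show ?thesis using psubset.prems by (intro exI[of _ Y]) simp
  qed
qed

lemma max_ex: "finite E \<Longrightarrow> Y \<subseteq> E \<Longrightarrow> P Y \<Longrightarrow>
   \<exists>Z. Y \<subseteq> Z \<and> Z \<subseteq> E \<and> P Z \<and> (\<forall>W. Z \<subset> W \<longrightarrow> W \<subseteq> E \<longrightarrow> \<not> P W)"
proof (induction "card (E - Y)" arbitrary: Y rule: less_induct)
  case less
  show ?case
  proof (cases "\<exists>W. Y \<subset> W \<and> W \<subseteq> E \<and> P W")
    case True
    then obtain W where W: "Y \<subset> W" "W \<subseteq> E" "P W" by blast
    have "E - W \<subset> E - Y" using W less.prems by blast
    hence "card (E - W) < card (E - Y)" using less.prems by (meson finite_Diff psubset_card_mono)
    from less.hyps[OF this less.prems(1) W(2,3)] obtain Z where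
      "W \<subseteq> Z" "Z \<subseteq> E" "P Z" "\<forall>V. Z \<subset> V \<longrightarrow> V \<subseteq> E \<longrightarrow> \<not> P V" by blast
    then show ?thesis using W(1) by (intro exI[of _ Z]) auto
  next
    case False then show ?thesis using less.prems by (intro exI[of _ Y]) auto
  qed
qed

theorem mainTheorem19:
  fixes E :: "'a set" and \<tau> :: "'a set \<Rightarrow> 'a set"
  assumes "convex_space E \<tau>"
    and "uniquely_generated E \<tau>"
    and "\<forall>A. A \<subseteq> E \<longrightarrow> (\<exists>!B. is_max_generator E \<tau> A B)"
  shows "hypercube_partition E (tau_classes E \<tau>)"
proof -
  have fin: "finite E" using assms(1) unfolding convex_space_def by (elim conjE)
  have conv: "\<And>Y1 Y2 Y3. Y1 \<subseteq> Y2 \<Longrightarrow> Y2 \<subseteq> Y3 \<Longrightarrow> Y3 \<subseteq> E \<Longrightarrow> \<tau> Y1 = \<tau> Y3 \<Longrightarrow> \<tau> Y2 = \<tau> Y1"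
  proof -
    fix Y1 Y2 Y3 assume h: "Y1 \<subseteq> Y2" "Y2 \<subseteq> Y3" "Y3 \<subseteq> E" "\<tau> Y1 = \<tau> Y3"
    have "\<forall>Y1 Y2 Y3. Y1 \<subseteq> Y2 \<and> Y2 \<subseteq> Y3 \<and> Y3 \<subseteq> E \<and> \<tau> Y1 = \<tau> Y3 \<longrightarrow> \<tau> Y2 = \<tau> Y1"
      using assms(1) unfolding convex_space_def by (elim conjE)
    thus "\<tau> Y2 = \<tau> Y1" using h by blast
  qed
  have iv: "\<exists>A B. A \<subseteq> B \<and> B \<subseteq> E \<and> {Y. Y \<subseteq> E \<and> \<tau> Y = \<tau> X} = interval A B" if X: "X \<subseteq> E" for X
  proof -
    obtain A where A: "is_basis E \<tau> X A" and Au: "\<And>A'. is_basis E \<tau> X A' \<Longrightarrow> A' = A"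
      using assms(2) X unfolding uniquely_generated_def by metis
    obtain B where B: "is_max_generator E \<tau> X B" and Bu: "\<And>B'. is_max_generator E \<tau> X B' \<Longrightarrow> B' = B"
      using assms(3) X by metis
    have AE: "A \<subseteq> E" "\<tau> A = \<tau> X" using A unfolding is_basis_def is_generator_def by auto
    have BE: "B \<subseteq> E" "\<tau> B = \<tau> X" using B unfolding is_max_generator_def is_generator_def by auto
    have sub: "A \<subseteq> Y \<and> Y \<subseteq> B" if Y: "Y \<subseteq> E" "\<tau> Y = \<tau> X" for Y
    proof
      have "finite Y" using Y fin finite_subset by blast
      from min_ex[of Y "\<lambda>Z. \<tau> Z = \<tau> X", OF this Y(2)] obtain Z where
        Z: "Z \<subseteq> Y" "\<tau> Z = \<tau> X" "\<forall>W. W \<subset> Z \<longrightarrow> \<tau> W \<noteq> \<tau> X" by blast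
      have "is_basis E \<tau> X Z" unfolding is_basis_def is_generator_def using Z Y by blast
      thus "A \<subseteq> Y" using Au Z by blast
    next
      from max_ex[of E Y "\<lambda>Z. \<tau> Z = \<tau> X", OF fin Y] obtain Z where
        Z: "Y \<subseteq> Z" "Z \<subseteq> E" "\<tau> Z = \<tau> X" "\<forall>W. Z \<subset> W \<longrightarrow> W \<subseteq> E \<longrightarrow> \<tau> W \<noteq> \<tau> X" by blast
      have "is_max_generator E \<tau> X Z" unfolding is_max_generator_def is_generator_def using Z by blast
      thus "Y \<subseteq> B" using Bu Z by blast
    qed
    have AB: "A \<subseteq> B" using sub[OF AE] by blast
    have "{Y. Y \<subseteq> E \<and> \<tau> Y = \<tau> X} = interval A B"
    proof (rule set_eqI, rule iffI)
      fix Y assume "Y \<in> {Y. Y \<subseteq> E \<and> \<tau> Y = \<tau> X}"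
      thus "Y \<in> interval A B" using sub unfolding interval_def by blast
    next
      fix Y assume "Y \<in> interval A B"
      hence Y: "A \<subseteq> Y" "Y \<subseteq> B" unfolding interval_def by auto
      have "\<tau> Y = \<tau> A" using conv[OF Y BE(1)] AE BE by simp
      thus "Y \<in> {Y. Y \<subseteq> E \<and> \<tau> Y = \<tau> X}" using Y BE AE by auto
    qed
    thus ?thesis using AB BE by blast
  qed
  show ?thesis unfolding hypercube_partition_def tau_classes_def
  proof (intro conjI)
    show "\<Union> ((\<lambda>X. {Y. Y \<subseteq> E \<and> \<tau> Y = \<tau> X}) ` Pow E) = Pow E"
    proof
      show "\<Union> ((\<lambda>X. {Y. Y \<subseteq> E \<and> \<tau> Y = \<tau> X}) ` Pow E) \<subseteq> Pow E" by auto
      show "Pow E \<subseteq> \<Union> ((\<lambda>X. {Y. Y \<subseteq> E \<and> \<tau> Y = \<tau> X}) ` Pow E)"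
      proof
        fix Z assume "Z \<in> Pow E"
        thus "Z \<in> \<Union> ((\<lambda>X. {Y. Y \<subseteq> E \<and> \<tau> Y = \<tau> X}) ` Pow E)"
          by (intro UnionI[of "{Y. Y \<subseteq> E \<and> \<tau> Y = \<tau> Z}"]) auto
      qed
    qed
    show "{} \<notin> (\<lambda>X. {Y. Y \<subseteq> E \<and> \<tau> Y = \<tau> X}) ` Pow E"
    proof
      assume "{} \<in> (\<lambda>X. {Y. Y \<subseteq> E \<and> \<tau> Y = \<tau> X}) ` Pow E"
      then obtain X where "X \<in> Pow E" "{} = {Y. Y \<subseteq> E \<and> \<tau> Y = \<tau> X}" by (rule imageE)
      thus False by (metis (mono_tags, lifting) PowD empty_iff mem_Collect_eq)
    qed
    show "\<forall>X\<in>(\<lambda>X. {Y. Y \<subseteq> E \<and> \<tau> Y = \<tau> X}) ` Pow E. \<forall>Y\<in>(\<lambda>X. {Y. Y \<subseteq> E \<and> \<tau> Y = \<tau> X}) ` Pow E. X \<noteq> Y \<longrightarrow> X \<inter> Y = {}"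
    proof (intro ballI impI)
      fix X Y assume "X \<in> (\<lambda>X. {Y. Y \<subseteq> E \<and> \<tau> Y = \<tau> X}) ` Pow E" "Y \<in> (\<lambda>X. {Y. Y \<subseteq> E \<and> \<tau> Y = \<tau> X}) ` Pow E" "X \<noteq> Y"
      then obtain X0 Y0 where "X = {Z. Z \<subseteq> E \<and> \<tau> Z = \<tau> X0}" "Y = {Z. Z \<subseteq> E \<and> \<tau> Z = \<tau> Y0}" by (auto elim!: imageE)
      thus "X \<inter> Y = {}" using \<open>X \<noteq> Y\<close> by auto
    qed
    show "\<forall>X\<in>(\<lambda>X. {Y. Y \<subseteq> E \<and> \<tau> Y = \<tau> X}) ` Pow E. \<exists>A B. A \<subseteq> B \<and> B \<subseteq> E \<and> X = interval A B"
    proof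
      fix X assume "X \<in> (\<lambda>X. {Y. Y \<subseteq> E \<and> \<tau> Y = \<tau> X}) ` Pow E"
      then obtain X0 where "X0 \<in> Pow E" "X = {Y. Y \<subseteq> E \<and> \<tau> Y = \<tau> X0}" by (rule imageE)
      thus "\<exists>A B. A \<subseteq> B \<and> B \<subseteq> E \<and> X = interval A B" using iv[of X0] by simp
    qed
  qed
qed

end
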